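(* For every process $s$, the set $\mathcal{L}(s)$ of trace distribution formulae satisfied by $s$ is a closed subset of the space of trace distribution formulae of $\mathcal{L}$ with respect to the topology induced by the metric $D$.
   Context: PTS $(\mathcal{S},A,\to)$ with finitely supported distributions; standing assumptions: processes are image-finite and finite. Computations $c=s_0\xrightarrow{a_1}\cdots\xrightarrow{a_n}s_n$ via transitions $s_{i-1}\xrightarrow{a_i}\pi_i$, $s_i\in\mathrm{supp}(\pi_i)$; $\Pr(c)=\prod\pi_i(s_i)$; $|c|=n$; maximal = not a proper prefix of another computation from the same process; $\mathcal{C}_{\max}(z)$. A resolution of $s$ is a PTS $\mathcal{Z}=(Z,A,\to_{\mathcal{Z}})$ with $\mathrm{corr}\colon Z\to\mathcal{S}$ and initial state $z_s$, $\mathrm{corr}(z_s)=s$, such that $z_s$ is in no target support, every other state is in the support of a target of a transition from a different state, every $z\xrightarrow{a}_{\mathcal{Z}}\pi$ is matched by $\mathrm{corr}(z)\xrightarrow{a}\pi'$ with $\pi(z')=\pi'(\mathrm{corr}(z'))$, and each state has at most one outgoing transition; $\mathrm{res}(s)$ the set of resolutions. Logic $\mathcal{L}$: trace formulae $\Phi::=\top\mid\langle a\rangle\Phi$, $\mathrm{depth}(\top)=0$, $\mathrm{depth}(\langle a\rangle\Phi)=1+\mathrm{depth}(\Phi)$; trace distribution formulae $\bigoplus_{i\in I}r_i\Phi_i$ ($I$ finite nonempty, $\Phi_i$ pairwise distinct, $r_i\in(0,1]$, $\sum r_i=1$), identified with probability distributions on trace formulae. $c\models\top$ always; $c\models\langle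 a\rangle\Phi$ iff $c=s\xrightarrow{a}c'$ with $c'\models\Phi$. $s\models\bigoplus_i r_i\Phi_i$ iff some $\mathcal{Z}\in\mathrm{res}(s)$ with initial state $z$ satisfies $\Pr(\{c\in\mathcal{C}_{\max}(z):c\models\Phi_i,|c|=\mathrm{depth}(\Phi_i)\})=r_i$ for all $i$. $\mathcal{L}(s)$ is the set of trace distribution formulae satisfied by $s$. Distance: $d(\Phi_1,\Phi_2)=0$ if $\Phi_1=\Phi_2$, else $1$; $D(\Psi_1,\Psi_2)=\min_\omega\sum\omega(\Phi,\Phi')d(\Phi,\Phi')$ over couplings $\omega$ of $\Psi_1,\Psi_2$ (Kantorovich lifting of $d$); $D$ is a metric on trace distribution formulae. *)

theory Defs
  imports "HOL-Analysis.Analysis" "HOL-Probability.Probability_Mass_Function"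
begin

text \<open>A PTS over states 's and actions 'a is given by its transition relation
  T :: ('s * 'a * 's pmf) set, where (s, a, pi) in T means s --a--> pi.\<close>

type_synonym ('s, 'a) pts = "('s \<times> 'a \<times> 's pmf) set"

fun is_comp :: "('s, 'a) pts \<Rightarrow> 's \<Rightarrow> ('a \<times> 's pmf \<times> 's) list \<Rightarrow> bool" where
  "is_comp T x [] = True"
| "is_comp T x ((a, \<pi>, y) # c) = ((x, a, \<pi>) \<in> T \<and> y \<in> set_pmf \<pi> \<and> is_comp T y c)"

definition comp_prob :: "('a \<times> 's pmf \<times> 's) list \<Rightarrow> real" where
  "comp_prob c = prod_list (map (\<lambda>(a, \<pi>, y). pmf \<pi> y) c)"

definition last_state :: "'s \<Rightarrow> ('a \<times> 's pmf \<times> 's) list \<Rightarrow> 's" where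
  "last_state x c = last (x # map (\<lambda>(a, \<pi>, y). y) c)"

definition max_comps :: "('s, 'a) pts \<Rightarrow> 's \<Rightarrow> ('a \<times> 's pmf \<times> 's) list set" where
  "max_comps T x = {c. is_comp T x c \<and> \<not> (\<exists>d. d \<noteq> [] \<and> is_comp T x (c @ d))}"

definition reach :: "('s, 'a) pts \<Rightarrow> 's \<Rightarrow> 's set" where
  "reach T x = {last_state x c | c. is_comp T x c}"

definition finitely_supported :: "('s, 'a) pts \<Rightarrow> bool" where
  "finitely_supported T \<longleftrightarrow> (\<forall>(x, a, \<pi>) \<in> T. finite (set_pmf \<pi>))"

definition image_finite :: "('s, 'a) pts \<Rightarrow> 's \<Rightarrow> bool" where
  "image_finite T s \<longleftrightarrow> (\<forall>t \<in> reach T s. finite {(a, \<pi>). (t, a, \<pi>) \<in> T})"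

definition finite_process :: "('s, 'a) pts \<Rightarrow> 's \<Rightarrow> bool" where
  "finite_process T s \<longleftrightarrow> finite (reach T s) \<and>
     (\<forall>t \<in> reach T s. \<forall>c. is_comp T t c \<and> c \<noteq> [] \<longrightarrow> last_state t c \<noteq> t)"

record ('s, 'a) resolution =
  rstates :: "nat set"
  rtrans  :: "(nat, 'a) pts"
  corr    :: "nat \<Rightarrow> 's"
  rinit   :: nat

definition is_resolution :: "('s, 'a) pts \<Rightarrow> 's \<Rightarrow> ('s, 'a) resolution \<Rightarrow> bool" where
  "is_resolution T s R \<longleftrightarrow>
     rinit R \<in> rstates R \<and> corr R (rinit R) = s \<and>
     (\<forall>(z, a, \<pi>) \<in> rtrans R. z \<in> rstates R \<and> set_pmf \<pi> \<subseteq> rstates R) \<and>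
     (\<forall>(z, a, \<pi>) \<in> rtrans R. rinit R \<notin> set_pmf \<pi>) \<and>
     (\<forall>z \<in> rstates R - {rinit R}. \<exists>(z', a, \<pi>) \<in> rtrans R. z' \<noteq> z \<and> z \<in> set_pmf \<pi>) \<and>
     (\<forall>(z, a, \<pi>) \<in> rtrans R. \<exists>\<pi>'. (corr R z, a, \<pi>') \<in> T \<and>
          inj_on (corr R) (set_pmf \<pi>) \<and>
          (\<forall>z' \<in> set_pmf \<pi>. pmf \<pi> z' = pmf \<pi>' (corr R z'))) \<and>
     (\<forall>z a \<pi> b \<rho>. (z, a, \<pi>) \<in> rtrans R \<longrightarrow> (z, b, \<rho>) \<in> rtrans R \<longrightarrow> a = b \<and> \<pi> = \<rho>)"

definition res :: "('s, 'a) pts \<Rightarrow> 's \<Rightarrow> ('s, 'a) resolution set" where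
  "res T s = {R. is_resolution T s R}"

datatype 'a tform = Top | Diam 'a "'a tform"

fun depth :: "'a tform \<Rightarrow> nat" where
  "depth Top = 0"
| "depth (Diam a \<Phi>) = Suc (depth \<Phi>)"

fun comp_models :: "('a \<times> 'x pmf \<times> 'x) list \<Rightarrow> 'a tform \<Rightarrow> bool" where
  "comp_models c Top = True"
| "comp_models [] (Diam a \<Phi>) = False"
| "comp_models ((b, \<pi>, y) # c) (Diam a \<Phi>) = (b = a \<and> comp_models c \<Phi>)"

text \<open>Trace distribution formulae are identified with finitely supported
  distributions over trace formulae.\<close>
definition tdf :: "'a tform pmf set" where
  "tdf = {\<Psi>. finite (set_pmf \<Psi>)}"

definition res_prob :: "('s, 'a) resolution \<Rightarrow> 'a tform \<Rightarrow> real" where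
  "res_prob R \<Phi> = (\<Sum>c \<in> {c \<in> max_comps (rtrans R) (rinit R).
                         comp_models c \<Phi> \<and> length c = depth \<Phi>}. comp_prob c)"

definition sat_tdf :: "('s, 'a) pts \<Rightarrow> 's \<Rightarrow> 'a tform pmf \<Rightarrow> bool" where
  "sat_tdf T s \<Psi> \<longleftrightarrow> (\<exists>R \<in> res T s. \<forall>\<Phi> \<in> set_pmf \<Psi>. res_prob R \<Phi> = pmf \<Psi> \<Phi>)"

definition Lsat :: "('s, 'a) pts \<Rightarrow> 's \<Rightarrow> 'a tform pmf set" where
  "Lsat T s = {\<Psi> \<in> tdf. sat_tdf T s \<Psi>}"

definition dtf :: "'a tform \<Rightarrow> 'a tform \<Rightarrow> real" where
  "dtf \<Phi>1 \<Phi>2 = (if \<Phi>1 = \<Phi>2 then 0 else 1)"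

definition couplings :: "'a pmf \<Rightarrow> 'a pmf \<Rightarrow> ('a \<times> 'a) pmf set" where
  "couplings \<Psi>1 \<Psi>2 = {\<omega>. map_pmf fst \<omega> = \<Psi>1 \<and> map_pmf snd \<omega> = \<Psi>2}"

definition kantD :: "'a tform pmf \<Rightarrow> 'a tform pmf \<Rightarrow> real" where
  "kantD \<Psi>1 \<Psi>2 = (INF \<omega> \<in> couplings \<Psi>1 \<Psi>2.
       (\<Sum>p \<in> set_pmf \<omega>. pmf \<omega> p * dtf (fst p) (snd p)))"

end

theory Submission
  imports Defs
begin


lemma last_state_Nil[simp]: "last_state x [] = x"
  by (simp add: last_state_def)
lemma last_state_Cons[simp]: "last_state x ((a,\<pi>,y)#c) = last_state y c"
  by (simp add: last_state_def)

lemma is_comp_append: "is_comp T x (c@d) \<longleftrightarrow> is_comp T x c \<and> is_comp T (last_state x c) d"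
  by (induction c arbitrary: x) auto

lemma last_state_append: "last_state x (c@d) = last_state (last_state x c) d"
  by (induction c arbitrary: x) auto

lemma reach_comp:
  assumes "t \<in> reach T s" "is_comp T t d" shows "last_state t d \<in> reach T s"
proof -
  from assms(1) obtain c where c: "is_comp T s c" "t = last_state s c" unfolding reach_def by auto
  have "is_comp T s (c@d)" using c assms(2) by (simp add: is_comp_append)
  moreover have "last_state s (c@d) = last_state t d" using c by (simp add: last_state_append)
  ultimately have "\<exists>c'. last_state t d = last_state s c' \<and> is_comp T s c'" by metis
  thus ?thesis by (simp add: reach_def)
qed

lemma reach_self: "s \<in> reach T s"
  unfolding reach_def by (rule CollectI, rule exI[of _ "[]"]) auto

definition steps :: "('s,'a) pts \<Rightarrow> 's \<Rightarrow> ('a \<times> 's pmf \<times> 's) set" where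
  "steps T s = (\<Union>x\<in>reach T s. \<Union>(a,\<pi>)\<in>{(a,\<pi>). (x,a,\<pi>)\<in>T}. (\<lambda>y. (a,\<pi>,y)) ` set_pmf \<pi>)"

lemma step_in_steps:
  assumes "x \<in> reach T s" "(x,a,\<pi>) \<in> T" "y \<in> set_pmf \<pi>"
  shows "(a,\<pi>,y) \<in> steps T s"
  unfolding steps_def
  apply (rule UN_I[OF assms(1)])
  apply (rule UN_I[of "(a,\<pi>)"])
  using assms(2,3) by auto

lemma steps_finite:
  assumes "finitely_supported T" "image_finite T s" "finite_process T s"
  shows "finite (steps T s)"
proof -
  have f1: "finite (reach T s)" using assms(3) by (simp add: finite_process_def)
  have f2: "finite (\<Union>(a,\<pi>)\<in>{(a,\<pi>). (x,a,\<pi>)\<in>T}. (\<lambda>y. (a,\<pi>,y)) ` set_pmf \<pi>)"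
    if x: "x \<in> reach T s" for x
  proof (rule finite_UN_I)
    show "finite {(a,\<pi>). (x,a,\<pi>)\<in>T}" using assms(2) x by (simp add: image_finite_def)
  next
    fix ap assume ap: "ap \<in> {(a,\<pi>). (x,a,\<pi>)\<in>T}"
    obtain a \<pi> where e: "ap = (a,\<pi>)" by (cases ap)
    have "(x,a,\<pi>)\<in>T" using ap e by simp
    hence "finite (set_pmf \<pi>)" using assms(1) unfolding finitely_supported_def by blast
    thus "finite (case ap of (a,\<pi>) \<Rightarrow> (\<lambda>y. (a,\<pi>,y)) ` set_pmf \<pi>)" using e by simp
  qed
  show ?thesis unfolding steps_def by (rule finite_UN_I[OF f1 f2])
qed

lemma comp_in_steps:
  assumes "is_comp T x c" "x \<in> reach T s" shows "set c \<subseteq> steps T s"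
  using assms
proof (induction c arbitrary: x)
  case Nil thus ?case by simp
next
  case (Cons st c)
  obtain a \<pi> y where st: "st = (a,\<pi>,y)" by (cases st) auto
  have h: "(x,a,\<pi>) \<in> T" "y \<in> set_pmf \<pi>" "is_comp T y c" using Cons.prems st by auto
  have "is_comp T x [(a,\<pi>,y)]" using h by simp
  hence "last_state x [(a,\<pi>,y)] \<in> reach T s" by (rule reach_comp[OF Cons.prems(2)])
  hence yr: "y \<in> reach T s" by simp
  have "st \<in> steps T s" unfolding st by (rule step_in_steps[OF Cons.prems(2) h(1,2)])
  thus ?case using Cons.IH[OF h(3) yr] by simp
qed

lemma comp_length:
  assumes fp: "finite_process T s" and c: "is_comp T s c"
  shows "length c < card (reach T s)"
proof (rule ccontr)
  assume "\<not> ?thesis"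
  hence ge: "card (reach T s) \<le> length c" by simp
  define st where "st i = last_state s (take i c)" for i
  have pre: "is_comp T s (take i c)" for i
  proof -
    have "is_comp T s (take i c @ drop i c)" using c by simp
    thus ?thesis by (simp only: is_comp_append)
  qed
  have inr: "st i \<in> reach T s" for i unfolding st_def reach_def using pre by blast
  have fin: "finite (reach T s)" using fp by (simp add: finite_process_def)
  have ninj: "\<not> inj_on st {0..length c}"
  proof
    assume inj: "inj_on st {0..length c}"
    have "st ` {0..length c} \<subseteq> reach T s" using inr by auto
    hence "card {0..length c} \<le> card (reach T s)"
      by (rule card_inj_on_le[OF inj _ fin])
    thus False using ge by simp
  qed
  obtain i j where ij0: "i \<in> {0..length c}" "j \<in> {0..length c}" "i \<noteq> j" "st i = st j"
    using ninj unfolding inj_on_def by auto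
  have "\<exists>i j. i < j \<and> j \<le> length c \<and> st i = st j"
  proof (cases "i < j")
    case True thus ?thesis using ij0 by auto
  next
    case False hence "j < i" using ij0(3) by simp
    thus ?thesis using ij0 by (intro exI[of _ j] exI[of _ i]) auto
  qed
  then obtain i j where ij: "i < j" "j \<le> length c" "st i = st j" by blast
  define d where "d = take (j-i) (drop i c)"
  have "take (i + (j-i)) c = take i c @ d" unfolding d_def by (rule take_add)
  hence tj: "take j c = take i c @ d" using ij(1) by simp
  have "is_comp T (st i) d" using pre[of j] unfolding tj st_def by (simp only: is_comp_append)
  moreover have "d \<noteq> []" unfolding d_def using ij by simp
  moreover have "last_state (st i) d = st i"
    using ij(3) unfolding st_def tj last_state_append by simp
  moreover have "\<forall>c. is_comp T (st i) c \<and> c \<noteq> [] \<longrightarrow> last_state (st i) c \<noteq> st i"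
    using fp inr[of i] unfolding finite_process_def by simp
  ultimately show False by simp
qed

lemma finite_comps:
  assumes "finitely_supported T" "image_finite T s" "finite_process T s"
  shows "finite {c. is_comp T s c}"
proof (rule finite_subset)
  show "{c. is_comp T s c} \<subseteq> {c. set c \<subseteq> steps T s \<and> length c \<le> card (reach T s)}"
  proof
    fix c assume "c \<in> {c. is_comp T s c}"
    hence "is_comp T s c" by simp
    thus "c \<in> {c. set c \<subseteq> steps T s \<and> length c \<le> card (reach T s)}"
      using comp_in_steps[OF _ reach_self, of T s c] comp_length[OF assms(3), of c] by simp
  qed
  show "finite {c. set c \<subseteq> steps T s \<and> length c \<le> card (reach T s)}"
    by (rule finite_lists_length_le[OF steps_finite[OF assms]])
qed



definition pi' :: "('s,'a) pts \<Rightarrow> ('s,'a) resolution \<Rightarrow> nat \<Rightarrow> 'a \<Rightarrow> nat pmf \<Rightarrow> 's pmf" where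
  "pi' T R z a \<pi> = (SOME \<pi>'. (corr R z, a, \<pi>') \<in> T \<and> (\<forall>z'\<in>set_pmf \<pi>. pmf \<pi> z' = pmf \<pi>' (corr R z')))"

fun Mc :: "('s,'a) pts \<Rightarrow> ('s,'a) resolution \<Rightarrow> nat \<Rightarrow> ('a \<times> nat pmf \<times> nat) list \<Rightarrow> ('a \<times> 's pmf \<times> 's) list" where
  "Mc T R z [] = []"
| "Mc T R z ((a,\<pi>,y)#c) = (a, pi' T R z a \<pi>, corr R y) # Mc T R y c"

fun tr :: "('a \<times> 'x pmf \<times> 'x) list \<Rightarrow> 'a tform" where
  "tr [] = Top"
| "tr ((a,\<pi>,y)#c) = Diam a (tr c)"

lemma models_tr: "comp_models c \<Phi> \<Longrightarrow> length c = depth \<Phi> \<Longrightarrow> \<Phi> = tr c"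
proof (induction c arbitrary: \<Phi>)
  case Nil thus ?case by (cases \<Phi>) auto
next
  case (Cons st c) thus ?case by (cases \<Phi>; cases st) auto
qed

lemma tr_Mc: "tr (Mc T R z c) = tr c"
  by (induction c arbitrary: z) auto

lemma res_step:
  assumes hR: "is_resolution T s R" and tz: "(z,a,\<pi>) \<in> rtrans R"
  shows "(corr R z, a, pi' T R z a \<pi>) \<in> T \<and> (\<forall>z'\<in>set_pmf \<pi>. pmf \<pi> z' = pmf (pi' T R z a \<pi>) (corr R z'))"
proof -
  have "\<exists>\<pi>'. (corr R z, a, \<pi>') \<in> T \<and> (\<forall>z'\<in>set_pmf \<pi>. pmf \<pi> z' = pmf \<pi>' (corr R z'))"
    using hR tz unfolding is_resolution_def by fast
  thus ?thesis unfolding pi'_def by (rule someI_ex)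
qed

lemma Mc_comp:
  assumes hR: "is_resolution T s R"
  shows "is_comp (rtrans R) z c \<Longrightarrow> is_comp T (corr R z) (Mc T R z c)"
proof (induction c arbitrary: z)
  case Nil thus ?case by simp
next
  case (Cons st c)
  obtain a \<pi> y where st: "st = (a,\<pi>,y)" by (cases st) auto
  have h: "(z,a,\<pi>) \<in> rtrans R" "y \<in> set_pmf \<pi>" "is_comp (rtrans R) y c" using Cons.prems st by auto
  note rs = res_step[OF hR h(1)]
  have "pmf (pi' T R z a \<pi>) (corr R y) = pmf \<pi> y" using rs h(2) by simp
  hence "corr R y \<in> set_pmf (pi' T R z a \<pi>)" using h(2) by (simp add: set_pmf_iff)
  thus ?case using Cons.IH[OF h(3)] rs st by simp
qed

lemma Mc_prob:
  assumes hR: "is_resolution T s R"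
  shows "is_comp (rtrans R) z c \<Longrightarrow> comp_prob (Mc T R z c) = comp_prob c"
proof (induction c arbitrary: z)
  case Nil thus ?case by (simp add: comp_prob_def)
next
  case (Cons st c)
  obtain a \<pi> y where st: "st = (a,\<pi>,y)" by (cases st) auto
  show ?case using Cons st res_step[OF hR, of z a \<pi>] by (auto simp: comp_prob_def)
qed

lemma Mc_inj:
  assumes hR: "is_resolution T s R"
  shows "is_comp (rtrans R) z c1 \<Longrightarrow> is_comp (rtrans R) z c2 \<Longrightarrow> Mc T R z c1 = Mc T R z c2 \<Longrightarrow> c1 = c2"
proof (induction c1 arbitrary: z c2)
  case Nil thus ?case by (cases c2) auto
next
  case (Cons st c)
  obtain a \<pi> y where st: "st = (a,\<pi>,y)" by (cases st) auto
  show ?case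
  proof (cases c2)
    case Nil thus ?thesis using Cons st by simp
  next
    case (Cons st2 c2')
    obtain b \<rho> x where st2: "st2 = (b,\<rho>,x)" by (cases st2) auto
    have t1: "(z,a,\<pi>) \<in> rtrans R" "y \<in> set_pmf \<pi>" "is_comp (rtrans R) y c"
      using Cons.prems st by auto
    have t2: "(z,b,\<rho>) \<in> rtrans R" "x \<in> set_pmf \<rho>" "is_comp (rtrans R) x c2'"
      using Cons.prems Cons st2 by auto
    have ab: "a = b \<and> \<pi> = \<rho>" using hR t1 t2 unfolding is_resolution_def by blast
    have inj: "inj_on (corr R) (set_pmf \<pi>)" using hR t1 unfolding is_resolution_def by fast
    have eq: "corr R y = corr R x" "Mc T R y c = Mc T R x c2'"
      using Cons.prems(3) st st2 Cons by auto
    have "y = x" using inj eq(1) t1(2) t2(2) ab by (auto dest: inj_onD)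
    thus ?thesis using Cons.IH[OF t1(3), of c2'] t2(3) eq(2) ab st st2 Cons by simp
  qed
qed

lemma Lsat_props:
  assumes "\<Psi> \<in> Lsat T s" "\<Phi> \<in> set_pmf \<Psi>"
  shows "\<Phi> \<in> tr ` {c. is_comp T s c} \<and> pmf \<Psi> \<Phi> \<in> (\<lambda>B. sum comp_prob B) ` Pow {c. is_comp T s c}"
proof -
  obtain R where R: "R \<in> res T s" "\<forall>\<Phi> \<in> set_pmf \<Psi>. res_prob R \<Phi> = pmf \<Psi> \<Phi>"
    using assms(1) unfolding Lsat_def sat_tdf_def by auto
  have hR: "is_resolution T s R" using R(1) by (simp add: res_def)
  define A where "A = {c \<in> max_comps (rtrans R) (rinit R). comp_models c \<Phi> \<and> length c = depth \<Phi>}"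
  have val: "pmf \<Psi> \<Phi> = sum comp_prob A" using R(2) assms(2) unfolding res_prob_def A_def by simp
  have Acomp: "\<And>c. c \<in> A \<Longrightarrow> is_comp (rtrans R) (rinit R) c" unfolding A_def max_comps_def by auto
  have cs: "corr R (rinit R) = s" using hR unfolding is_resolution_def by simp
  have MC: "\<And>c. c \<in> A \<Longrightarrow> Mc T R (rinit R) c \<in> {c. is_comp T s c}"
    using Mc_comp[OF hR] Acomp cs by fastforce
  have "pmf \<Psi> \<Phi> > 0" using assms(2) by (simp add: pmf_positive)
  hence "A \<noteq> {}" using val by auto
  then obtain c where c: "c \<in> A" by blast
  have "\<Phi> = tr c" using c unfolding A_def by (auto intro: models_tr)
  hence "\<Phi> = tr (Mc T R (rinit R) c)" by (simp add: tr_Mc)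
  hence t: "\<Phi> \<in> tr ` {c. is_comp T s c}" using MC[OF c] by blast
  have inj: "inj_on (Mc T R (rinit R)) A"
    using Mc_inj[OF hR] Acomp by (meson inj_onI)
  have "sum comp_prob (Mc T R (rinit R) ` A) = sum (comp_prob \<circ> Mc T R (rinit R)) A"
    by (rule sum.reindex[OF inj])
  also have "\<dots> = sum comp_prob A" using Mc_prob[OF hR] Acomp by (auto intro: sum.cong)
  finally have "pmf \<Psi> \<Phi> = sum comp_prob (Mc T R (rinit R) ` A)" using val by simp
  moreover have "Mc T R (rinit R) ` A \<in> Pow {c. is_comp T s c}" using MC by blast
  ultimately show ?thesis using t by blast
qed

lemma Lsat_finite:
  assumes "finitely_supported T" "image_finite T s" "finite_process T s"
  shows "finite (Lsat T s)"
proof -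
  define C where "C = {c. is_comp T s c}"
  define TR where "TR = tr ` C"
  define V where "V = (\<lambda>B. sum comp_prob B) ` Pow C"
  have fC: "finite C" unfolding C_def using finite_comps[OF assms] .
  have fin: "finite (PiE TR (\<lambda>_. insert 0 V))" unfolding TR_def V_def using fC
    by (intro finite_PiE) auto
  have props: "\<And>\<Psi> \<Phi>. \<Psi> \<in> Lsat T s \<Longrightarrow> \<Phi> \<in> set_pmf \<Psi> \<Longrightarrow> \<Phi> \<in> TR \<and> pmf \<Psi> \<Phi> \<in> V"
    unfolding TR_def V_def C_def by (rule Lsat_props)
  have sub: "(\<lambda>\<Psi>. restrict (pmf \<Psi>) TR) ` Lsat T s \<subseteq> PiE TR (\<lambda>_. insert 0 V)"
  proof
    fix f assume "f \<in> (\<lambda>\<Psi>. restrict (pmf \<Psi>) TR) ` Lsat T s"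
    then obtain \<Psi> where \<Psi>: "\<Psi> \<in> Lsat T s" "f = restrict (pmf \<Psi>) TR" by blast
    have "pmf \<Psi> \<Phi> \<in> insert 0 V" for \<Phi>
    proof (cases "\<Phi> \<in> set_pmf \<Psi>")
      case True thus ?thesis using props[OF \<Psi>(1) True] by simp
    next
      case False thus ?thesis by (simp add: set_pmf_iff)
    qed
    thus "f \<in> PiE TR (\<lambda>_. insert 0 V)" using \<Psi>(2) by auto
  qed
  have inj: "inj_on (\<lambda>\<Psi>. restrict (pmf \<Psi>) TR) (Lsat T s)"
  proof (rule inj_onI)
    fix \<Psi>1 \<Psi>2 assume h: "\<Psi>1 \<in> Lsat T s" "\<Psi>2 \<in> Lsat T s" "restrict (pmf \<Psi>1) TR = restrict (pmf \<Psi>2) TR"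
    show "\<Psi>1 = \<Psi>2"
    proof (rule pmf_eqI)
      fix \<Phi> show "pmf \<Psi>1 \<Phi> = pmf \<Psi>2 \<Phi>"
      proof (cases "\<Phi> \<in> TR")
        case True
        have "restrict (pmf \<Psi>1) TR \<Phi> = restrict (pmf \<Psi>2) TR \<Phi>" using h(3) by simp
        thus ?thesis using True by simp
      next
        case False
        hence "\<Phi> \<notin> set_pmf \<Psi>1" "\<Phi> \<notin> set_pmf \<Psi>2" using props[OF h(1)] props[OF h(2)] by auto
        thus ?thesis by (simp add: set_pmf_iff)
      qed
    qed
  qed
  show ?thesis using finite_imageD[OF finite_subset[OF sub fin] inj] .
qed



definition cost :: "('a tform \<times> 'a tform) pmf \<Rightarrow> real" where
  "cost \<omega> = (\<Sum>p \<in> set_pmf \<omega>. pmf \<omega> p * dtf (fst p) (snd p))"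

lemma kantD_cost: "kantD p q = (INF \<omega> \<in> couplings p q. cost \<omega>)"
  unfolding kantD_def cost_def ..

lemma cost_nonneg: "cost \<omega> \<ge> 0"
  unfolding cost_def dtf_def by (intro sum_nonneg) auto

lemma couplings_ne: "couplings p q \<noteq> {}"
  using map_fst_pair_pmf map_snd_pair_pmf unfolding couplings_def by blast

lemma bdd: "bdd_below (cost ` A)"
  using cost_nonneg by (intro bdd_belowI[of _ 0]) auto

lemma kantD_nonneg: "kantD p q \<ge> 0"
  unfolding kantD_cost using couplings_ne cost_nonneg by (intro cINF_greatest) auto

lemma kantD_le: "\<omega> \<in> couplings p q \<Longrightarrow> kantD p q \<le> cost \<omega>"
  unfolding kantD_cost by (rule cINF_lower[OF bdd])

lemma cost_swap: "cost (map_pmf prod.swap \<omega>) = cost \<omega>"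
proof -
  have inj: "inj (prod.swap :: 'x \<times> 'x \<Rightarrow> _)" by (simp add: inj_on_def)
  have "cost (map_pmf prod.swap \<omega>) = (\<Sum>p \<in> prod.swap ` set_pmf \<omega>. pmf (map_pmf prod.swap \<omega>) p * dtf (fst p) (snd p))"
    unfolding cost_def by simp
  also have "\<dots> = (\<Sum>p \<in> set_pmf \<omega>. pmf (map_pmf prod.swap \<omega>) (prod.swap p) * dtf (snd p) (fst p))"
    by (subst sum.reindex) (auto simp: inj_on_def)
  also have "\<dots> = cost \<omega>" unfolding cost_def using pmf_map_inj'[OF inj]
    by (intro sum.cong) (auto simp: dtf_def)
  finally show ?thesis .
qed

lemma kantD_commute_le: "kantD q p \<le> kantD p q"
  unfolding kantD_cost[of p q]
proof (rule cINF_greatest[OF couplings_ne])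
  fix \<omega> assume "\<omega> \<in> couplings p q"
  hence "map_pmf prod.swap \<omega> \<in> couplings q p"
    unfolding couplings_def by (auto simp: map_pmf_comp)
  thus "kantD q p \<le> cost \<omega>" using kantD_le cost_swap by metis
qed

lemma kantD_commute: "kantD p q = kantD q p"
  using kantD_commute_le by (metis order_antisym)

lemma kantD_refl: "kantD p p = 0"
proof -
  have "map_pmf (\<lambda>a. (a,a)) p \<in> couplings p p" unfolding couplings_def by (simp add: map_pmf_comp)
  moreover have "cost (map_pmf (\<lambda>a. (a,a)) p) = 0" unfolding cost_def dtf_def by (intro sum.neutral) auto
  ultimately show ?thesis using kantD_le kantD_nonneg by (metis order_antisym)
qed

lemma coupling_fin:
  assumes "\<omega> \<in> couplings p q" "p \<in> tdf" "q \<in> tdf"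
  shows "finite (set_pmf \<omega>)"
proof -
  have wp: "map_pmf fst \<omega> = p" "map_pmf snd \<omega> = q" using assms unfolding couplings_def by auto
  have "set_pmf \<omega> \<subseteq> set_pmf p \<times> set_pmf q"
  proof
    fix x assume "x \<in> set_pmf \<omega>"
    hence "fst x \<in> set_pmf (map_pmf fst \<omega>)" "snd x \<in> set_pmf (map_pmf snd \<omega>)" by auto
    thus "x \<in> set_pmf p \<times> set_pmf q" using wp by (auto simp: mem_Times_iff)
  qed
  thus ?thesis using assms unfolding tdf_def by (auto intro: finite_subset)
qed

lemma cost_measure:
  assumes fS: "finite (set_pmf \<omega>)"
  shows "cost \<omega> = measure \<omega> {x. fst x \<noteq> snd x}"
proof -
  define D where "D = {x::'a tform \<times> 'a tform. fst x \<noteq> snd x}"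
  have "cost \<omega> = (\<Sum>x \<in> set_pmf \<omega>. if x \<in> D then pmf \<omega> x else 0)"
    unfolding cost_def D_def dtf_def by (intro sum.cong) auto
  also have "\<dots> = sum (pmf \<omega>) (set_pmf \<omega> \<inter> D)"
    using sum.inter_restrict[OF fS, of "pmf \<omega>" D] by simp
  also have "\<dots> = measure \<omega> (set_pmf \<omega> \<inter> D)" using fS by (simp add: measure_measure_pmf_finite)
  also have "\<dots> = measure \<omega> D" using measure_Int_set_pmf[of \<omega> D] by (simp add: Int_commute)
  finally show ?thesis unfolding D_def .
qed

lemma kantD_pos:
  assumes p: "p \<in> tdf" and q: "q \<in> tdf" and ne: "p \<noteq> q"
  shows "kantD p q > 0"
proof -
  have "\<exists>\<Phi>0. pmf p \<Phi>0 \<noteq> pmf q \<Phi>0"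
  proof (rule ccontr)
    assume "\<not> ?thesis"
    hence "\<And>x. pmf p x = pmf q x" by simp
    hence "p = q" by (rule pmf_eqI)
    thus False using ne by simp
  qed
  then obtain \<Phi>0 where d: "pmf p \<Phi>0 \<noteq> pmf q \<Phi>0" by (elim exE)
  define e where "e = \<bar>pmf p \<Phi>0 - pmf q \<Phi>0\<bar>"
  have e: "e > 0" using d unfolding e_def by simp
  have bound: "e \<le> cost \<omega>" if w: "\<omega> \<in> couplings p q" for \<omega>
  proof -
    have wp: "map_pmf fst \<omega> = p" "map_pmf snd \<omega> = q" using w unfolding couplings_def by auto
    define D where "D = {x::'a tform \<times> 'a tform. fst x \<noteq> snd x}"
    have eqD: "cost \<omega> = measure \<omega> D" unfolding D_def by (rule cost_measure[OF coupling_fin[OF w p q]])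
    have m1: "pmf p \<Phi>0 = measure \<omega> (fst -` {\<Phi>0})" using wp(1) pmf_map[of fst \<omega> \<Phi>0] by simp
    have m2: "pmf q \<Phi>0 = measure \<omega> (snd -` {\<Phi>0})" using wp(2) pmf_map[of snd \<omega> \<Phi>0] by simp
    have a: "measure \<omega> (fst -` {\<Phi>0}) \<le> measure \<omega> (D \<union> snd -` {\<Phi>0})"
      by (rule measure_pmf.finite_measure_mono) (auto simp: D_def)
    have b: "measure \<omega> (snd -` {\<Phi>0}) \<le> measure \<omega> (D \<union> fst -` {\<Phi>0})"
      by (rule measure_pmf.finite_measure_mono) (auto simp: D_def)
    have a': "measure \<omega> (D \<union> snd -` {\<Phi>0}) \<le> measure \<omega> D + measure \<omega> (snd -` {\<Phi>0})"
      by (rule measure_Un_le) auto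
    have b': "measure \<omega> (D \<union> fst -` {\<Phi>0}) \<le> measure \<omega> D + measure \<omega> (fst -` {\<Phi>0})"
      by (rule measure_Un_le) auto
    show ?thesis unfolding eqD e_def m1 m2 using a b a' b' by linarith
  qed
  have "e \<le> kantD p q" unfolding kantD_cost
    by (rule cINF_greatest[OF couplings_ne bound])
  thus ?thesis using e by simp
qed

lemma glue:
  assumes pq: "pq \<in> couplings p q" and qr: "qr \<in> couplings q r"
    and p: "p \<in> tdf" and q: "q \<in> tdf" and r: "r \<in> tdf"
  shows "kantD p r \<le> cost pq + cost qr"
proof -
  have pqm: "map_pmf fst pq = p" "map_pmf snd pq = q" using pq unfolding couplings_def by auto
  have qrm: "map_pmf fst qr = q" "map_pmf snd qr = r" using qr unfolding couplings_def by auto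
  define K where "K y = cond_pmf qr {yz. fst yz = y}" for y
  define \<nu> where "\<nu> = bind_pmf pq (\<lambda>xy. map_pmf (\<lambda>yz. (fst xy, snd xy, snd yz)) (K (snd xy)))"
  have wd: "\<And>y. y \<in> set_pmf q \<Longrightarrow> set_pmf qr \<inter> {yz. fst yz = y} \<noteq> {}"
    by (force simp: qrm(1)[symmetric])
  have wd': "\<And>xy. xy \<in> set_pmf pq \<Longrightarrow> snd xy \<in> set_pmf q"
    unfolding pqm(2)[symmetric] by auto
  have setK: "\<And>y yz. y \<in> set_pmf q \<Longrightarrow> yz \<in> set_pmf (K y) \<Longrightarrow> fst yz = y"
    unfolding K_def using wd by (simp add: set_cond_pmf)
  have m12: "map_pmf (\<lambda>(x,y,z). (x,y)) \<nu> = pq"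
    unfolding \<nu>_def map_bind_pmf by (simp add: map_pmf_comp bind_return_pmf')
  have "map_pmf (\<lambda>(x,y,z). (y,z)) \<nu> = bind_pmf pq (\<lambda>xy. K (snd xy))"
    unfolding \<nu>_def map_bind_pmf map_pmf_comp
  proof (intro bind_pmf_cong refl)
    fix xy assume "xy \<in> set_pmf pq"
    hence "snd xy \<in> set_pmf q" by (rule wd')
    thus "map_pmf (\<lambda>x. case (fst xy, snd xy, snd x) of (x, y, z) \<Rightarrow> (y, z)) (K (snd xy)) = K (snd xy)"
    proof (intro map_pmf_idI)
      fix yz assume "yz \<in> set_pmf (K (snd xy))"
      hence "fst yz = snd xy" using setK \<open>snd xy \<in> set_pmf q\<close> by blast
      thus "(case (fst xy, snd xy, snd yz) of (x, y, z) \<Rightarrow> (y, z)) = yz" by (cases yz) auto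
    qed
  qed
  also have "\<dots> = bind_pmf q K" unfolding pqm(2)[symmetric] bind_map_pmf ..
  also have "\<dots> = qr" unfolding K_def qrm(1)[symmetric] bind_map_pmf
    by (subst bind_cond_pmf_cancel) (auto simp: eq_commute)
  finally have m23: "map_pmf (\<lambda>(x,y,z). (y,z)) \<nu> = qr" .
  define pr where "pr = map_pmf (\<lambda>(x,y,z). (x,z)) \<nu>"
  have "map_pmf fst pr = map_pmf fst (map_pmf (\<lambda>(x,y,z). (x,y)) \<nu>)"
    unfolding pr_def map_pmf_comp by (simp add: case_prod_beta)
  hence f: "map_pmf fst pr = p" using m12 pqm by simp
  have "map_pmf snd pr = map_pmf snd (map_pmf (\<lambda>(x,y,z). (y,z)) \<nu>)"
    unfolding pr_def map_pmf_comp by (simp add: case_prod_beta)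
  hence s: "map_pmf snd pr = r" using m23 qrm by simp
  have prc: "pr \<in> couplings p r" unfolding couplings_def using f s by simp
  have "kantD p r \<le> cost pr" by (rule kantD_le[OF prc])
  also have "cost pr = measure pr {x. fst x \<noteq> snd x}"
    by (rule cost_measure[OF coupling_fin[OF prc p r]])
  also have "\<dots> = measure \<nu> {t. fst t \<noteq> snd (snd t)}"
    unfolding pr_def by (simp add: vimage_def case_prod_beta)
  also have "\<dots> \<le> measure \<nu> ({t. fst t \<noteq> fst (snd t)} \<union> {t. fst (snd t) \<noteq> snd (snd t)})"
    by (rule measure_pmf.finite_measure_mono) auto
  also have "\<dots> \<le> measure \<nu> {t. fst t \<noteq> fst (snd t)} + measure \<nu> {t. fst (snd t) \<noteq> snd (snd t)}"
    by (rule measure_Un_le) auto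
  also have "measure \<nu> {t. fst t \<noteq> fst (snd t)} = cost pq"
  proof -
    have "cost pq = measure pq {x. fst x \<noteq> snd x}" by (rule cost_measure[OF coupling_fin[OF pq p q]])
    also have "\<dots> = measure \<nu> {t. fst t \<noteq> fst (snd t)}"
      unfolding m12[symmetric] by (simp add: vimage_def case_prod_beta)
    finally show ?thesis by simp
  qed
  also have "measure \<nu> {t. fst (snd t) \<noteq> snd (snd t)} = cost qr"
  proof -
    have "cost qr = measure qr {x. fst x \<noteq> snd x}" by (rule cost_measure[OF coupling_fin[OF qr q r]])
    also have "\<dots> = measure \<nu> {t. fst (snd t) \<noteq> snd (snd t)}"
      unfolding m23[symmetric] by (simp add: vimage_def case_prod_beta)
    finally show ?thesis by simp
  qed
  finally show ?thesis .
qed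

lemma kantD_triangle:
  assumes p: "p \<in> tdf" and q: "q \<in> tdf" and r: "r \<in> tdf"
  shows "kantD p r \<le> kantD p q + kantD q r"
proof -
  have "kantD p r - cost qr \<le> kantD p q" if qr: "qr \<in> couplings q r" for qr
  proof -
    have "kantD p r - cost qr \<le> cost pq" if pq: "pq \<in> couplings p q" for pq
      using glue[OF pq qr p q r] by simp
    thus ?thesis unfolding kantD_cost[of p q] by (intro cINF_greatest[OF couplings_ne])
  qed
  hence "kantD p r - kantD p q \<le> cost qr" if "qr \<in> couplings q r" for qr using that by force
  hence "kantD p r - kantD p q \<le> kantD q r"
    unfolding kantD_cost[of q r] by (intro cINF_greatest[OF couplings_ne])
  thus ?thesis by simp
qed



lemma metric: "Metric_space (tdf :: 'a tform pmf set) kantD"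
proof
  fix x y :: "'a tform pmf" show "0 \<le> kantD x y" by (rule kantD_nonneg)
  show "kantD x y = kantD y x" by (rule kantD_commute)
next
  fix x y :: "'a tform pmf" assume "x \<in> tdf" "y \<in> tdf"
  thus "kantD x y = 0 \<longleftrightarrow> x = y" using kantD_pos kantD_refl by fastforce
next
  fix x y z :: "'a tform pmf" assume "x \<in> tdf" "y \<in> tdf" "z \<in> tdf"
  thus "kantD x z \<le> kantD x y + kantD y z" by (rule kantD_triangle)
qed



theorem proposition15:
  fixes T :: "('s, 'a) pts" and s :: 's
  assumes "finitely_supported T"
    and "image_finite T s"
    and "finite_process T s"
  shows "closedin (Metric_space.mtopology tdf kantD) (Lsat T s)"
proof -
  interpret Metric_space "tdf :: 'a tform pmf set" kantD by (rule metric)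
  have fin: "finite (Lsat T s)" by (rule Lsat_finite[OF assms])
  have sub: "Lsat T s \<subseteq> tdf" unfolding Lsat_def by auto
  show ?thesis unfolding closedin_metric
  proof (intro conjI sub allI impI)
    fix x assume x: "x \<in> tdf - Lsat T s"
    define L where "L = Lsat T s"
    define r where "r = (if L = {} then 1 else Min (kantD x ` L))"
    have pos: "\<And>y. y \<in> L \<Longrightarrow> kantD x y > 0" using kantD_pos x sub unfolding L_def by blast
    have fL: "finite L" using fin L_def by simp
    have r: "r > 0" unfolding r_def using fL pos by auto
    have rl: "\<And>y. y \<in> L \<Longrightarrow> r \<le> kantD x y" unfolding r_def using fL by auto
    have "disjnt (Lsat T s) (mball x r)" unfolding disjnt_def L_def[symmetric] using rl by force
    thus "\<exists>r>0. disjnt (Lsat T s) (mball x r)" using r by blast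
  qed
qed

end
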